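(* Let $T$ be a $\pi$-increasing tree, let $V_1\subsetneq V(T)$ be a nonempty set which is a union of blocks of $\pi$, and let $v_1\in V_1$. Then $T$ can be written as $T=\mathrm{spl}(T_1,v_1;T_2,v_2)$ for some $\pi$-increasing trees $T_1$, $T_2$ with vertex-sets $V_1$ and $V_2=V(T)\setminus V_1$ respectively and some vertex $v_2\in V_2$, if and only if $V_1=\bigcup_{i\in I}\pi_i$ where $\{\pi_i: i\in I\}$ is a union of vertex-sets of connected components of $G_{v_1}(T)$. In this case, $T_1$, $T_2$ and $v_2$ are unique.
   Context: Standing assumptions: $r\ge2$ and $\pi$ is a set partition of $\{1,\dots,r\}$ having $\{1\}$ as a block; its blocks are $\pi_i$ with maxima $\mu_i$; $\pi^x$ denotes the block containing $x$. An unordered increasing tree is a rooted tree on distinct positive integers, sons unordered, each son larger than its father. A $\pi$-increasing tree is an unordered increasing tree $T$ whose vertex-set is a union of blocks of $\pi$ and such that for any two elements $i<j$ of a same block of $\pi$ contained in $V(T)$, $i$ is an ancestor of $j$ in $T$. $v$-decomposition: for a vertex $v$ of $T$ with chain $a_1<\dots<a_\ell=v$ from the root to $v$, removing the chain edges leaves components $T^{(a_j)}$ rooted at $a_j$. Splice: for unordered increasing trees $T_1,T_2$ with disjoint vertex-sets and $v_1\in V(T_1)$, $v_2\in V(T_2)$, $v_1>v_2$, $\mathrm{spl}(T_1,v_1;T_2,v_2)$ is the tree on $V(T_1)\cup V(T_2)$ obtained by merging the root-to-$v_1$ chain of $T_1$ and the root-to-$v_2$ chain of $T_2$ into one increasing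 chain (ending at $v_1$) and attaching at each chain vertex its component from the $v_1$-decomposition of $T_1$ or the $v_2$-decomposition of $T_2$. $v$-dependence graph $G_v(T)$: directed graph on the blocks of $\pi$ contained in $V(T)$; for each such block $\pi_i$ whose maximum $\mu_i$ is not on the chain $a_1,\dots,a_\ell$, $\mu_i$ is a non-root vertex of a unique $T^{(a_j)}$ and there is an edge (possibly a loop) $\pi_i\to\pi^{a_j}$; no other edges. Connected components are taken ignoring directions. *)

theory Defs
  imports Main "HOL-Library.Disjoint_Sets"
begin

text \<open>An unordered increasing tree on distinct positive integers is represented by its
vertex set and its set of edges (father, son).  Sons are unordered (edges form a set).\<close>

type_synonym tree = "nat set \<times> (nat \<times> nat) set"

definition verts :: "tree \<Rightarrow> nat set" where "verts T = fst T"
definition edges :: "tree \<Rightarrow> (nat \<times> nat) set" where "edges T = snd T"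

definition root :: "tree \<Rightarrow> nat" where "root T = Min (verts T)"

definition inc_tree :: "tree \<Rightarrow> bool" where
  "inc_tree T \<longleftrightarrow> finite (verts T) \<and> verts T \<noteq> {} \<and> 0 \<notin> verts T \<and>
     edges T \<subseteq> verts T \<times> verts T \<and>
     (\<forall>(a,b)\<in>edges T. a < b) \<and>
     (\<forall>v\<in>verts T. v \<noteq> root T \<longrightarrow> (\<exists>!u. (u,v) \<in> edges T))"

definition ancestor :: "tree \<Rightarrow> nat \<Rightarrow> nat \<Rightarrow> bool" where
  "ancestor T i j \<longleftrightarrow> (i, j) \<in> (edges T)\<^sup>+"

definition std_partition :: "nat \<Rightarrow> nat set set \<Rightarrow> bool" where
  "std_partition r P \<longleftrightarrow> r \<ge> 2 \<and> partition_on {1..r} P \<and> {1} \<in> P"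

definition union_of_blocks :: "nat set set \<Rightarrow> nat set \<Rightarrow> bool" where
  "union_of_blocks P V \<longleftrightarrow> (\<exists>Q\<subseteq>P. V = \<Union>Q)"

definition pi_inc_tree :: "nat set set \<Rightarrow> tree \<Rightarrow> bool" where
  "pi_inc_tree P T \<longleftrightarrow> inc_tree T \<and> union_of_blocks P (verts T) \<and>
     (\<forall>B\<in>P. B \<subseteq> verts T \<longrightarrow> (\<forall>i\<in>B. \<forall>j\<in>B. i < j \<longrightarrow> ancestor T i j))"

definition chain :: "tree \<Rightarrow> nat \<Rightarrow> nat set" where
  "chain T v = {a \<in> verts T. (a, v) \<in> (edges T)\<^sup>*}"

text \<open>edges remaining after removing the chain edges (the chain edges are exactly the edges
whose son lies on the chain)\<close>
definition offchain_edges :: "tree \<Rightarrow> nat \<Rightarrow> (nat \<times> nat) set" where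
  "offchain_edges T v = {(x, y) \<in> edges T. y \<notin> chain T v}"

definition decomp_comp :: "tree \<Rightarrow> nat \<Rightarrow> nat \<Rightarrow> tree" where
  "decomp_comp T v a =
     (let W = {x. (a, x) \<in> (offchain_edges T v)\<^sup>*}
      in (W, {(x, y) \<in> offchain_edges T v. x \<in> W \<and> y \<in> W}))"

definition spl :: "tree \<Rightarrow> nat \<Rightarrow> tree \<Rightarrow> nat \<Rightarrow> tree" where
  "spl T1 v1 T2 v2 =
     (let C = chain T1 v1 \<union> chain T2 v2
      in (verts T1 \<union> verts T2,
          {(a, b). a \<in> C \<and> b \<in> C \<and> a < b \<and> \<not> (\<exists>c\<in>C. a < c \<and> c < b)}
          \<union> (\<Union>a\<in>chain T1 v1. edges (decomp_comp T1 v1 a))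
          \<union> (\<Union>a\<in>chain T2 v2. edges (decomp_comp T2 v2 a))))"

definition dep_nodes :: "nat set set \<Rightarrow> tree \<Rightarrow> nat set set" where
  "dep_nodes P T = {B \<in> P. B \<subseteq> verts T}"

definition dep_edges :: "nat set set \<Rightarrow> tree \<Rightarrow> nat \<Rightarrow> (nat set \<times> nat set) set" where
  "dep_edges P T v =
     {(B, B'). B \<in> dep_nodes P T \<and> B' \<in> dep_nodes P T \<and> Max B \<notin> chain T v \<and>
        (\<exists>a\<in>chain T v. Max B \<in> verts (decomp_comp T v a) \<and> Max B \<noteq> a \<and> a \<in> B')}"

definition dep_components :: "nat set set \<Rightarrow> tree \<Rightarrow> nat \<Rightarrow> nat set set set" where
  "dep_components P T v =
     (\<lambda>B. {B' \<in> dep_nodes P T. (B, B') \<in> (dep_edges P T v \<union> (dep_edges P T v)\<inverse>)\<^sup>*})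
       ` dep_nodes P T"

end

theory Submission
  imports Defs
begin


lemma verts_pair[simp]: "verts (A, B) = A" by (simp add: verts_def)
lemma edges_pair[simp]: "edges (A, B) = B" by (simp add: edges_def)
lemma tree_eq: "T = (verts T, edges T)" by (simp add: verts_def edges_def)

definition consec :: "nat set \<Rightarrow> (nat \<times> nat) set" where
  "consec K = {(a, b). a \<in> K \<and> b \<in> K \<and> a < b \<and> \<not> (\<exists>c\<in>K. a < c \<and> c < b)}"

lemma spl_verts: "verts (spl T1 v1 T2 v2) = verts T1 \<union> verts T2"
  by (simp add: spl_def Let_def)
lemma spl_edges: "edges (spl T1 v1 T2 v2) = consec (chain T1 v1 \<union> chain T2 v2)
   \<union> (\<Union>a\<in>chain T1 v1. edges (decomp_comp T1 v1 a))
   \<union> (\<Union>a\<in>chain T2 v2. edges (decomp_comp T2 v2 a))"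
  by (simp add: spl_def Let_def consec_def)

lemma it_fin: "inc_tree X \<Longrightarrow> finite (verts X)" by (simp add: inc_tree_def)
lemma it_ne: "inc_tree X \<Longrightarrow> verts X \<noteq> {}" by (simp add: inc_tree_def)
lemma it_0: "inc_tree X \<Longrightarrow> 0 \<notin> verts X" by (simp add: inc_tree_def)
lemma it_edge: "inc_tree X \<Longrightarrow> (a,b) \<in> edges X \<Longrightarrow> a \<in> verts X \<and> b \<in> verts X \<and> a < b"
  unfolding inc_tree_def by blast
lemma it_root: "inc_tree X \<Longrightarrow> root X \<in> verts X"
  unfolding inc_tree_def root_def by auto
lemma it_root_le: "inc_tree X \<Longrightarrow> x \<in> verts X \<Longrightarrow> root X \<le> x"
  unfolding inc_tree_def root_def by auto
lemma it_father: "inc_tree X \<Longrightarrow> y \<in> verts X \<Longrightarrow> y \<noteq> root X \<Longrightarrow> \<exists>u. (u,y) \<in> edges X"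
  unfolding inc_tree_def by blast
lemma it_uniq: assumes "inc_tree X" "(u,y) \<in> edges X" "(u',y) \<in> edges X" shows "u = u'"
proof -
  have "y \<in> verts X" "u \<in> verts X" "u < y" using it_edge[OF assms(1,2)] by auto
  moreover have "root X \<le> u" using it_root_le[OF assms(1)] calculation by auto
  ultimately have "\<exists>!u. (u,y) \<in> edges X" using assms(1) unfolding inc_tree_def by auto
  thus ?thesis using assms by auto
qed

lemma it_rtr_le: assumes "inc_tree X" "(a,b) \<in> (edges X)\<^sup>*" shows "a \<le> b"
  using assms(2) by (induction rule: rtrancl_induct) (auto dest: it_edge[OF assms(1)])
lemma it_tr_less: assumes "inc_tree X" "(a,b) \<in> (edges X)\<^sup>+" shows "a < b"
  using assms(2) by (induction rule: trancl_induct) (auto dest: it_edge[OF assms(1)])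
lemma it_tr_verts: assumes "inc_tree X" "(a,b) \<in> (edges X)\<^sup>+" shows "a \<in> verts X \<and> b \<in> verts X"
  using assms(2) by (induction rule: trancl_induct) (auto dest: it_edge[OF assms(1)])
lemma it_rtr_verts: assumes "inc_tree X" "(a,b) \<in> (edges X)\<^sup>*" "b \<in> verts X" shows "a \<in> verts X"
  using assms it_tr_verts by (metis rtranclD)
lemma it_rtr_verts2: assumes "inc_tree X" "(a,b) \<in> (edges X)\<^sup>*" "a \<in> verts X" shows "b \<in> verts X"
  using assms it_tr_verts by (metis rtranclD)

lemma it_root_reach: assumes "inc_tree X" "y \<in> verts X" shows "(root X, y) \<in> (edges X)\<^sup>*"
  using assms(2)
proof (induction y rule: less_induct)
  case (less y)
  show ?case
  proof (cases "y = root X")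
    case False
    then obtain u where u: "(u,y) \<in> edges X" using it_father[OF assms(1) less.prems] by blast
    with it_edge[OF assms(1) u] less.IH show ?thesis by (meson rtrancl.rtrancl_into_rtrancl)
  qed simp
qed

lemma it_lin: assumes "inc_tree X" "(b,y) \<in> (edges X)\<^sup>*" "(a,y) \<in> (edges X)\<^sup>*" "a \<le> b"
  shows "(a,b) \<in> (edges X)\<^sup>*"
  using assms(2-4)
proof (induction y arbitrary: rule: less_induct)
  case (less y)
  show ?case
  proof (cases "b = y")
    case True thus ?thesis using less by simp
  next
    case False
    then obtain u where u: "(b,u) \<in> (edges X)\<^sup>*" "(u,y) \<in> edges X"
      using less.prems(1) by (metis rtranclE)
    have "b < y" using False it_rtr_le[OF assms(1) less.prems(1)] by simp
    hence "a \<noteq> y" using less.prems by simp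
    then obtain u' where u': "(a,u') \<in> (edges X)\<^sup>*" "(u',y) \<in> edges X"
      using less.prems(2) by (metis rtranclE)
    have "u' = u" using it_uniq[OF assms(1) u'(2) u(2)] .
    moreover have "u < y" using it_edge[OF assms(1) u(2)] by simp
    ultimately show ?thesis using less.IH u u' less.prems(3) by blast
  qed
qed



lemma chain_sub: "chain X v \<subseteq> verts X" by (auto simp: chain_def)
lemma chain_v: "v \<in> verts X \<Longrightarrow> v \<in> chain X v" by (auto simp: chain_def)
lemma chain_root: "inc_tree X \<Longrightarrow> v \<in> verts X \<Longrightarrow> root X \<in> chain X v"
  by (auto simp: chain_def it_root it_root_reach)
lemma chain_le: "inc_tree X \<Longrightarrow> a \<in> chain X v \<Longrightarrow> a \<le> v"
  by (auto simp: chain_def it_rtr_le)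
lemma chain_lin: "inc_tree X \<Longrightarrow> a \<in> chain X v \<Longrightarrow> b \<in> chain X v \<Longrightarrow> a \<le> b \<Longrightarrow> (a,b) \<in> (edges X)\<^sup>*"
  by (auto simp: chain_def intro: it_lin)
lemma chain_up: "inc_tree X \<Longrightarrow> (x,y) \<in> (edges X)\<^sup>* \<Longrightarrow> y \<in> chain X v \<Longrightarrow> x \<in> chain X v"
  unfolding chain_def using it_rtr_verts by (auto intro: rtrancl_trans)

lemma off_sub: "offchain_edges X v \<subseteq> edges X" by (auto simp: offchain_edges_def)
lemma off_son: "(x,y) \<in> offchain_edges X v \<Longrightarrow> y \<notin> chain X v" by (auto simp: offchain_edges_def)
lemma off_reach_ne: "(a,x) \<in> (offchain_edges X v)\<^sup>* \<Longrightarrow> x \<noteq> a \<Longrightarrow> x \<notin> chain X v"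
  by (metis off_son rtranclE)
lemma comp_verts: "verts (decomp_comp X v a) = {x. (a,x) \<in> (offchain_edges X v)\<^sup>*}"
  by (simp add: decomp_comp_def Let_def)
lemma comp_edges: "edges (decomp_comp X v a) =
   {(x,y) \<in> offchain_edges X v. (a,x) \<in> (offchain_edges X v)\<^sup>* \<and> (a,y) \<in> (offchain_edges X v)\<^sup>*}"
  by (simp add: decomp_comp_def Let_def)
lemma comp_edges_off: "edges (decomp_comp X v a) \<subseteq> offchain_edges X v"
  by (auto simp: comp_edges)

lemma off_rtr: "(a,x) \<in> (offchain_edges X v)\<^sup>* \<Longrightarrow> (a,x) \<in> (edges X)\<^sup>*"
  using off_sub rtrancl_mono by blast
lemma W_ge: "inc_tree X \<Longrightarrow> (a,x) \<in> (offchain_edges X v)\<^sup>* \<Longrightarrow> a \<le> x"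
  using off_rtr it_rtr_le by blast
lemma W_sub: "inc_tree X \<Longrightarrow> a \<in> verts X \<Longrightarrow> (a,x) \<in> (offchain_edges X v)\<^sup>* \<Longrightarrow> x \<in> verts X"
  using off_rtr it_rtr_verts2 by blast

lemma anchor_ex: assumes it: "inc_tree X" and v: "v \<in> verts X" and x: "x \<in> verts X"
  shows "\<exists>a\<in>chain X v. (a,x) \<in> (offchain_edges X v)\<^sup>*"
  using x
proof (induction x rule: less_induct)
  case (less x)
  show ?case
  proof (cases "x \<in> chain X v")
    case False
    hence "x \<noteq> root X" using chain_root[OF it v] by auto
    then obtain u where u: "(u,x) \<in> edges X" using it_father[OF it less.prems] by blast
    hence "u < x" "u \<in> verts X" using it_edge[OF it u] by auto
    then obtain a where a: "a \<in> chain X v" "(a,u) \<in> (offchain_edges X v)\<^sup>*" using less.IH by blast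
    have "(u,x) \<in> offchain_edges X v" using u False by (simp add: offchain_edges_def)
    thus ?thesis using a by (meson rtrancl.rtrancl_into_rtrancl)
  qed blast
qed

lemma desc_off: assumes it: "inc_tree X" and "x \<notin> chain X v" "(x,m) \<in> (edges X)\<^sup>*"
  shows "(x,m) \<in> (offchain_edges X v)\<^sup>* \<and> m \<notin> chain X v"
  using assms(3)
proof (induction rule: rtrancl_induct)
  case base thus ?case using assms by simp
next
  case (step y z)
  have "z \<notin> chain X v" using step chain_up[OF it] by (meson r_into_rtrancl)
  hence "(y,z) \<in> offchain_edges X v" using step by (simp add: offchain_edges_def)
  thus ?case using step \<open>z \<notin> chain X v\<close> by (meson rtrancl.rtrancl_into_rtrancl)
qed

lemma pred_consec: assumes "finite K" "z \<in> K" "y \<in> K" "y < z"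
  shows "Max {c\<in>K. c < z} \<in> K \<and> Max {c\<in>K. c < z} < z \<and> y \<le> Max {c\<in>K. c < z}
     \<and> (Max {c\<in>K. c < z}, z) \<in> consec K"
proof -
  let ?S = "{c\<in>K. c < z}"
  have f: "finite ?S" using assms(1) by simp
  have ne: "?S \<noteq> {}" using assms by blast
  have m: "Max ?S \<in> ?S" using Max_in[OF f ne] .
  have ge: "c \<le> Max ?S" if "c \<in> K" "c < z" for c using Max_ge[OF f] that by simp
  have y: "y \<le> Max ?S" using ge assms by simp
  have nb: "\<not> (\<exists>c\<in>K. Max ?S < c \<and> c < z)"
  proof
    assume "\<exists>c\<in>K. Max ?S < c \<and> c < z"
    then obtain c where c: "c \<in> K" "Max ?S < c" "c < z" by blast
    have "c \<le> Max ?S" using ge c(1,3) by blast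
    thus False using c(2) by simp
  qed
  have mk: "Max ?S \<in> K" "Max ?S < z" using m by auto
  have "(Max ?S, z) \<in> consec K" unfolding consec_def using mk nb assms(2) by blast
  thus ?thesis using mk y by blast
qed

lemma chainchar:
  assumes it: "inc_tree Y" and K: "K \<subseteq> verts Y" "k \<in> K" "\<forall>x\<in>K. x \<le> k" "root Y \<in> K" "consec K \<subseteq> edges Y"
  shows "chain Y k = K" and "\<forall>y\<in>K. \<forall>z\<in>K. y \<le> z \<longrightarrow> (y,z) \<in> (edges Y)\<^sup>*"
proof -
  have fK: "finite K" using K(1) it_fin[OF it] finite_subset by blast
  have L: "\<forall>y\<in>K. y \<le> z \<longrightarrow> (y,z) \<in> (edges Y)\<^sup>*" if "z \<in> K" for z
    using that
  proof (induction z rule: less_induct)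
    case (less z)
    show ?case
    proof (intro ballI impI)
      fix y assume y: "y \<in> K" "y \<le> z"
      show "(y,z) \<in> (edges Y)\<^sup>*"
      proof (cases "y = z")
        case False
        hence "y < z" using y by simp
        note p = pred_consec[OF fK less.prems y(1) this]
        have "(y, Max {c\<in>K. c < z}) \<in> (edges Y)\<^sup>*" using less.IH p y by blast
        moreover have "(Max {c\<in>K. c < z}, z) \<in> edges Y" using p K(5) by blast
        ultimately show ?thesis by (rule rtrancl_into_rtrancl)
      qed simp
    qed
  qed
  thus "\<forall>y\<in>K. \<forall>z\<in>K. y \<le> z \<longrightarrow> (y,z) \<in> (edges Y)\<^sup>*" by blast
  have up: "y \<in> K" if "z \<in> K" "(y,z) \<in> (edges Y)\<^sup>*" for y z
    using that
  proof (induction z rule: less_induct)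
    case (less z)
    show ?case
    proof (cases "y = z")
      case False
      then obtain u where u: "(y,u) \<in> (edges Y)\<^sup>*" "(u,z) \<in> edges Y" using less.prems(2) by (metis rtranclE)
      have uz: "u < z" "u \<in> verts Y" using it_edge[OF it u(2)] by auto
      have "root Y \<le> u" using it_root_le[OF it uz(2)] .
      hence "root Y < z" using uz by simp
      from pred_consec[OF fK less.prems(1) K(4) this] K(5)
      have p: "Max {c\<in>K. c < z} \<in> K" "(Max {c\<in>K. c < z}, z) \<in> edges Y" by auto
      have "u = Max {c\<in>K. c < z}" using it_uniq[OF it u(2) p(2)] .
      thus ?thesis using less.IH uz u p by auto
    qed (use less in simp)
  qed
  show "chain Y k = K"
  proof
    show "chain Y k \<subseteq> K" using up K(2) by (auto simp: chain_def)
    show "K \<subseteq> chain Y k" using L[OF K(2)] K by (auto simp: chain_def)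
  qed
qed

lemma reach:
  assumes "edges (decomp_comp X v a) \<subseteq> offchain_edges Y w"
    and "\<And>x y. (a,x) \<in> (offchain_edges X v)\<^sup>* \<Longrightarrow> (x,y) \<in> offchain_edges Y w \<Longrightarrow> (x,y) \<in> offchain_edges X v"
  shows "decomp_comp Y w a = decomp_comp X v a"
proof -
  let ?O = "offchain_edges X v" and ?R = "offchain_edges Y w"
  have W: "(a,x) \<in> ?R\<^sup>* \<longleftrightarrow> (a,x) \<in> ?O\<^sup>*" for x
  proof
    assume "(a,x) \<in> ?R\<^sup>*" thus "(a,x) \<in> ?O\<^sup>*"
      by (induction rule: rtrancl_induct) (auto intro: rtrancl_into_rtrancl assms(2))
  next
    assume "(a,x) \<in> ?O\<^sup>*" thus "(a,x) \<in> ?R\<^sup>*"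
    proof (induction rule: rtrancl_induct)
      case (step y z)
      have "(y,z) \<in> edges (decomp_comp X v a)" using step by (auto simp: comp_edges intro: rtrancl_into_rtrancl)
      thus ?case using step assms(1) by (auto intro: rtrancl_into_rtrancl)
    qed simp
  qed
  have E: "{(x,y) \<in> ?R. (a,x) \<in> ?R\<^sup>* \<and> (a,y) \<in> ?R\<^sup>*} = {(x,y) \<in> ?O. (a,x) \<in> ?O\<^sup>* \<and> (a,y) \<in> ?O\<^sup>*}"
    using W assms by (auto simp: comp_edges)
  show ?thesis unfolding decomp_comp_def Let_def using W E by simp
qed

lemma edges_decomp: assumes it: "inc_tree X" and v: "v \<in> verts X"
  shows "edges X = consec (chain X v) \<union> (\<Union>a\<in>chain X v. edges (decomp_comp X v a))"
proof
  show "edges X \<subseteq> consec (chain X v) \<union> (\<Union>a\<in>chain X v. edges (decomp_comp X v a))"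
  proof
    fix e assume e: "e \<in> edges X"
    obtain x y where xy: "e = (x,y)" by force
    have ex: "x \<in> verts X" "y \<in> verts X" "x < y" using it_edge[OF it] e xy by auto
    show "e \<in> consec (chain X v) \<union> (\<Union>a\<in>chain X v. edges (decomp_comp X v a))"
    proof (cases "y \<in> chain X v")
      case True
      hence xc: "x \<in> chain X v" using chain_up[OF it] e xy by blast
      have "\<not> (\<exists>c\<in>chain X v. x < c \<and> c < y)"
      proof
        assume "\<exists>c\<in>chain X v. x < c \<and> c < y"
        then obtain c where c: "c \<in> chain X v" "x < c" "c < y" by blast
        have "(c,y) \<in> (edges X)\<^sup>*" using chain_lin[OF it c(1) True] c by simp
        then obtain u where "(c,u) \<in> (edges X)\<^sup>*" "(u,y) \<in> edges X" using c by (metis less_irrefl rtranclE)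
        moreover hence "u = x" using it_uniq[OF it] e xy by blast
        ultimately show False using it_rtr_le[OF it] c by fastforce
      qed
      thus ?thesis using xc True ex xy by (auto simp: consec_def)
    next
      case False
      hence off: "(x,y) \<in> offchain_edges X v" using e xy by (simp add: offchain_edges_def)
      obtain a where a: "a \<in> chain X v" "(a,x) \<in> (offchain_edges X v)\<^sup>*" using anchor_ex[OF it v ex(1)] by blast
      have "(a,y) \<in> (offchain_edges X v)\<^sup>*" using a off by (meson rtrancl.rtrancl_into_rtrancl)
      hence "e \<in> edges (decomp_comp X v a)" using a off xy by (simp add: comp_edges)
      thus ?thesis using a by blast
    qed
  qed
next
  have "consec (chain X v) \<subseteq> edges X"
  proof
    fix e assume e: "e \<in> consec (chain X v)"
    then obtain a b where ab: "e = (a,b)" "a \<in> chain X v" "b \<in> chain X v" "a < b"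
      "\<not> (\<exists>c\<in>chain X v. a < c \<and> c < b)" by (auto simp: consec_def)
    have ar: "(a,b) \<in> (edges X)\<^sup>*" using chain_lin[OF it ab(2,3)] ab by simp
    then obtain u where u: "(a,u) \<in> (edges X)\<^sup>*" "(u,b) \<in> edges X" using ab by (metis less_irrefl rtranclE)
    have "u \<in> chain X v" using chain_up[OF it _ ab(3)] u(2) by blast
    moreover have "u < b" using it_edge[OF it u(2)] by simp
    moreover have "a \<le> u" using it_rtr_le[OF it u(1)] .
    ultimately have "u = a" using ab(5) by fastforce
    thus "e \<in> edges X" using u ab by simp
  qed
  moreover have "(\<Union>a\<in>chain X v. edges (decomp_comp X v a)) \<subseteq> edges X"
    using comp_edges_off off_sub by (meson UN_least order_trans)
  ultimately show "consec (chain X v) \<union> (\<Union>a\<in>chain X v. edges (decomp_comp X v a)) \<subseteq> edges X"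
    by (rule Un_least)
qed

lemma verts_decomp: assumes it: "inc_tree X" and v: "v \<in> verts X"
  shows "verts X = (\<Union>a\<in>chain X v. verts (decomp_comp X v a))"
proof
  show "verts X \<subseteq> (\<Union>a\<in>chain X v. verts (decomp_comp X v a))"
    using anchor_ex[OF it v] by (auto simp: comp_verts)
  show "(\<Union>a\<in>chain X v. verts (decomp_comp X v a)) \<subseteq> verts X"
  proof
    fix x assume "x \<in> (\<Union>a\<in>chain X v. verts (decomp_comp X v a))"
    then obtain a where "a \<in> chain X v" "(a,x) \<in> (offchain_edges X v)\<^sup>*" by (auto simp: comp_verts)
    thus "x \<in> verts X" using W_sub[OF it] chain_sub by blast
  qed
qed



lemma consec_unique: assumes "(u,z) \<in> consec K" "(u',z) \<in> consec K" shows "u = u'"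
proof (rule ccontr)
  assume ne: "u \<noteq> u'"
  have a: "u \<in> K" "u < z" "\<not> (\<exists>c\<in>K. u < c \<and> c < z)" using assms(1) unfolding consec_def by simp_all
  have b: "u' \<in> K" "u' < z" "\<not> (\<exists>c\<in>K. u' < c \<and> c < z)" using assms(2) unfolding consec_def by simp_all
  show False
  proof (cases "u < u'")
    case True thus False using a b by blast
  next
    case False
    with ne have "u' < u" by simp
    thus False using a b by blast
  qed
qed

lemma consec_son: "(u,z) \<in> consec K \<Longrightarrow> u \<in> K \<and> z \<in> K \<and> u < z"
  unfolding consec_def by simp

lemma restr:
  assumes it: "inc_tree X" and v: "v \<in> verts X" and K: "K \<subseteq> chain X v" "K \<noteq> {}"
  and Y: "Y = (\<Union>a\<in>K. verts (decomp_comp X v a), consec K \<union> (\<Union>a\<in>K. edges (decomp_comp X v a)))"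
  shows "inc_tree Y \<and> chain Y (Max K) = K \<and> (\<forall>a\<in>K. decomp_comp Y (Max K) a = decomp_comp X v a)
     \<and> (\<forall>i\<in>verts Y. \<forall>j\<in>verts Y. ancestor X i j \<longrightarrow> ancestor Y i j)"
proof -
  let ?O = "offchain_edges X v"
  let ?W = "\<Union>a\<in>K. verts (decomp_comp X v a)"
  let ?D = "\<Union>a\<in>K. edges (decomp_comp X v a)"
  have vY: "verts Y = ?W" and eY: "edges Y = consec K \<union> ?D" using Y by simp_all
  have KV: "K \<subseteq> verts X" using K chain_sub by blast
  have fK: "finite K" using KV it_fin[OF it] finite_subset by blast
  have inW: "x \<in> ?W \<longleftrightarrow> (\<exists>a\<in>K. (a,x) \<in> ?O\<^sup>*)" for x by (simp add: comp_verts)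
  have inW1: "\<exists>a\<in>K. (a,x) \<in> ?O\<^sup>*" if "x \<in> ?W" for x using that inW[of x] by simp
  have inW2: "x \<in> ?W" if "a \<in> K" "(a,x) \<in> ?O\<^sup>*" for a x using that inW[of x] by blast
  have WV: "?W \<subseteq> verts X" using W_sub[OF it] KV by (auto simp: comp_verts)
  have finW: "finite ?W" using WV it_fin[OF it] finite_subset by blast
  have KW: "K \<subseteq> ?W"
  proof
    fix a assume a: "a \<in> K"
    hence "a \<in> verts (decomp_comp X v a)" by (simp add: comp_verts)
    thus "a \<in> ?W" using a by (intro UN_I)
  qed
  have WchK: "x \<in> K" if xW: "x \<in> ?W" and xc: "x \<in> chain X v" for x
  proof -
    obtain a where a: "a \<in> K" "(a,x) \<in> ?O\<^sup>*" using inW1[OF xW] by blast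
    hence "x = a" using off_reach_ne[OF a(2)] xc by blast
    thus ?thesis using a by simp
  qed
  have Dsub: "?D \<subseteq> ?O" using comp_edges_off by blast
  have DE: "?D \<subseteq> edges X" using Dsub off_sub by blast
  have Dson: "y \<notin> chain X v" if "(x,y) \<in> ?D" for x y using that Dsub off_son by blast
  have DW: "x \<in> ?W \<and> y \<in> ?W" if "(x,y) \<in> ?D" for x y using that by (auto simp: comp_edges comp_verts)
  let ?m = "Min K"
  have mK: "?m \<in> K" using Min_in fK K(2) by blast
  have mle: "?m \<le> x" if xW: "x \<in> ?W" for x
  proof -
    obtain a where a: "a \<in> K" "(a,x) \<in> ?O\<^sup>*" using inW1[OF xW] by blast
    have "?m \<le> a" using Min_le[OF fK a(1)] .
    also have "a \<le> x" using W_ge[OF it a(2)] .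
    finally show ?thesis .
  qed
  have rootY: "root Y = ?m" unfolding root_def vY using finW mle KW mK by (intro Min_eqI) auto
  have father: "\<exists>!u. (u,y) \<in> edges Y" if y: "y \<in> verts Y" "y \<noteq> root Y" for y
  proof (cases "y \<in> K")
    case True
    have "?m \<le> y" using Min_le[OF fK True] .
    hence "?m < y" using y rootY by simp
    note p = pred_consec[OF fK True mK this]
    show ?thesis
    proof
      show "(Max {c\<in>K. c < y}, y) \<in> edges Y" using p eY by blast
    next
      fix u assume u: "(u,y) \<in> edges Y"
      have "(u,y) \<notin> ?D" using Dson True K(1) by blast
      hence "(u,y) \<in> consec K" using u eY by blast
      thus "u = Max {c\<in>K. c < y}" using consec_unique p by blast
    qed
  next
    case False
    have yW: "y \<in> ?W" using y vY by simp
    hence ync: "y \<notin> chain X v" using WchK False by blast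
    obtain a where a: "a \<in> K" "(a,y) \<in> ?O\<^sup>*" using inW1[OF yW] by blast
    have "y \<noteq> a" using a False by blast
    then obtain u where u: "(a,u) \<in> ?O\<^sup>*" "(u,y) \<in> ?O" using a(2) by (metis rtranclE)
    have "(a,y) \<in> ?O\<^sup>*" using a by simp
    hence "(u,y) \<in> edges (decomp_comp X v a)" using u by (simp add: comp_edges)
    hence uD: "(u,y) \<in> ?D" using a by blast
    show ?thesis
    proof
      show "(u,y) \<in> edges Y" using uD eY by blast
    next
      fix u' assume u': "(u',y) \<in> edges Y"
      have "(u',y) \<notin> consec K" using False consec_son by blast
      hence "(u',y) \<in> edges X" using u' eY DE by blast
      moreover have "(u,y) \<in> edges X" using uD DE by blast
      ultimately show "u' = u" using it_uniq[OF it] by blast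
    qed
  qed
  have itY: "inc_tree Y"
    unfolding inc_tree_def
  proof (intro conjI)
    show "finite (verts Y)" using finW vY by simp
    show "verts Y \<noteq> {}" using KW K(2) vY by blast
    show "0 \<notin> verts Y" using WV it_0[OF it] vY by blast
    show "edges Y \<subseteq> verts Y \<times> verts Y"
    proof
      fix e assume e: "e \<in> edges Y"
      obtain x y where xy: "e = (x,y)" by force
      have "(x,y) \<in> consec K \<or> (x,y) \<in> ?D" using e xy eY by simp
      thus "e \<in> verts Y \<times> verts Y"
      proof
        assume "(x,y) \<in> consec K" thus ?thesis using consec_son[of x y K] KW vY xy by blast
      next
        assume "(x,y) \<in> ?D" thus ?thesis using DW[of x y] vY xy by blast
      qed
    qed
    show "\<forall>(a,b)\<in>edges Y. a < b"
    proof
      fix e assume e: "e \<in> edges Y"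
      obtain x y where xy: "e = (x,y)" by force
      have "(x,y) \<in> consec K \<or> (x,y) \<in> ?D" using e xy eY by simp
      hence "x < y"
      proof
        assume "(x,y) \<in> consec K" thus ?thesis using consec_son[of x y K] by blast
      next
        assume "(x,y) \<in> ?D" hence "(x,y) \<in> edges X" using DE by blast
        thus ?thesis using it_edge[OF it] by blast
      qed
      thus "case e of (a,b) \<Rightarrow> a < b" using xy by simp
    qed
    show "\<forall>v\<in>verts Y. v \<noteq> root Y \<longrightarrow> (\<exists>!u. (u,v) \<in> edges Y)" using father by blast
  qed
  have cc: "K \<subseteq> verts Y" "Max K \<in> K" "\<forall>x\<in>K. x \<le> Max K" "root Y \<in> K" "consec K \<subseteq> edges Y"
    using KW vY Max_in[OF fK K(2)] Max_ge[OF fK] rootY mK eY by auto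
  have chY: "chain Y (Max K) = K" using chainchar(1)[OF itY cc] .
  have lin: "\<forall>y\<in>K. \<forall>z\<in>K. y \<le> z \<longrightarrow> (y,z) \<in> (edges Y)\<^sup>*" using chainchar(2)[OF itY cc] .
  have offY: "offchain_edges Y (Max K) = ?D"
  proof
    show "offchain_edges Y (Max K) \<subseteq> ?D"
    proof
      fix e assume e: "e \<in> offchain_edges Y (Max K)"
      then obtain x y where xy: "e = (x,y)" "(x,y) \<in> edges Y" "y \<notin> K"
        using chY by (auto simp: offchain_edges_def)
      thus "e \<in> ?D" using eY consec_son by blast
    qed
    show "?D \<subseteq> offchain_edges Y (Max K)"
    proof
      fix e assume e: "e \<in> ?D"
      obtain x y where xy0: "e = (x,y)" by force
      hence xy: "e = (x,y)" "(x,y) \<in> ?D" using e by simp_all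
      hence "y \<notin> K" using Dson[of x y] K(1) by blast
      thus "e \<in> offchain_edges Y (Max K)" using xy eY chY by (auto simp: offchain_edges_def)
    qed
  qed
  have comps: "\<forall>a\<in>K. decomp_comp Y (Max K) a = decomp_comp X v a"
  proof
    fix a assume a: "a \<in> K"
    show "decomp_comp Y (Max K) a = decomp_comp X v a"
    proof (rule reach)
      show "edges (decomp_comp X v a) \<subseteq> offchain_edges Y (Max K)" using offY a by blast
      show "\<And>x y. (a,x) \<in> ?O\<^sup>* \<Longrightarrow> (x,y) \<in> offchain_edges Y (Max K) \<Longrightarrow> (x,y) \<in> ?O"
        using offY Dsub by blast
    qed
  qed
  have anc: "(i,j) \<in> (edges Y)\<^sup>+" if "i \<in> ?W" "j \<in> ?W" "(i,j) \<in> (edges X)\<^sup>+" for i j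
    using that
  proof (induction j rule: less_induct)
    case (less j)
    obtain u where u: "(i,u) \<in> (edges X)\<^sup>*" "(u,j) \<in> edges X" using tranclD2[OF less.prems(3)] by blast
    have ij: "i < j" using it_tr_less[OF it less.prems(3)] .
    show ?case
    proof (cases "j \<in> chain X v")
      case True
      hence jK: "j \<in> K" using WchK less.prems by blast
      have "i \<in> chain X v" using chain_up[OF it _ True] less.prems(3) by (meson trancl_into_rtrancl)
      hence iK: "i \<in> K" using WchK less.prems by blast
      have "(i,j) \<in> (edges Y)\<^sup>*" using lin iK jK ij by simp
      thus ?thesis using ij by (metis less_irrefl rtranclD)
    next
      case False
      hence uO: "(u,j) \<in> ?O" using u by (simp add: offchain_edges_def)
      obtain a where a: "a \<in> K" "(a,j) \<in> ?O\<^sup>*" using inW1[OF less.prems(2)] by blast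
      have "j \<noteq> a" using a False K(1) by blast
      then obtain u' where u': "(a,u') \<in> ?O\<^sup>*" "(u',j) \<in> ?O" using a(2) by (metis rtranclE)
      have "u' = u" using it_uniq[OF it] u'(2) u(2) off_sub by blast
      hence ua: "(a,u) \<in> ?O\<^sup>*" using u' by simp
      hence "(u,j) \<in> edges (decomp_comp X v a)" using uO a by (simp add: comp_edges)
      hence uY: "(u,j) \<in> edges Y" using a eY by blast
      have uW: "u \<in> ?W" using inW2[OF a(1) ua] .
      show ?thesis
      proof (cases "i = u")
        case True thus ?thesis using uY by blast
      next
        case False
        hence "(i,u) \<in> (edges X)\<^sup>+" using u(1) by (metis rtranclD)
        moreover have "u < j" using it_edge[OF it u(2)] by simp
        ultimately have "(i,u) \<in> (edges Y)\<^sup>+" using less.IH less.prems(1) uW by blast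
        thus ?thesis using uY by (rule trancl_into_trancl)
      qed
    qed
  qed
  show ?thesis using itY chY comps anc vY by (auto simp: ancestor_def)
qed



definition restrT :: "tree \<Rightarrow> nat \<Rightarrow> nat set \<Rightarrow> tree" where
  "restrT X v K = (\<Union>a\<in>K. verts (decomp_comp X v a), consec K \<union> (\<Union>a\<in>K. edges (decomp_comp X v a)))"

definition SC :: "tree \<Rightarrow> nat \<Rightarrow> nat set \<Rightarrow> bool" where
  "SC T v V1 \<longleftrightarrow> (\<forall>a\<in>chain T v. \<forall>x\<in>verts (decomp_comp T v a). (x \<in> V1 \<longleftrightarrow> a \<in> V1))"

lemma spl_struct:
  assumes itT: "inc_tree T" and it1: "inc_tree T1" and it2: "inc_tree T2"
    and disj: "verts T1 \<inter> verts T2 = {}"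
    and v1: "v1 \<in> verts T1" and v2: "v2 \<in> verts T2" and lt: "v2 < v1" and T: "T = spl T1 v1 T2 v2"
  shows "chain T v1 = chain T1 v1 \<union> chain T2 v2 \<and>
    (\<forall>a\<in>chain T1 v1. decomp_comp T v1 a = decomp_comp T1 v1 a) \<and>
    (\<forall>a\<in>chain T2 v2. decomp_comp T v1 a = decomp_comp T2 v2 a)"
proof -
  let ?C1 = "chain T1 v1" and ?C2 = "chain T2 v2"
  let ?C = "?C1 \<union> ?C2"
  let ?D1 = "\<Union>a\<in>?C1. edges (decomp_comp T1 v1 a)"
  let ?D2 = "\<Union>a\<in>?C2. edges (decomp_comp T2 v2 a)"
  let ?O1 = "offchain_edges T1 v1" and ?O2 = "offchain_edges T2 v2"
  have vT: "verts T = verts T1 \<union> verts T2" using T spl_verts by simp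
  have eT: "edges T = consec ?C \<union> ?D1 \<union> ?D2" using T spl_edges by simp
  have C1V: "?C1 \<subseteq> verts T1" and C2V: "?C2 \<subseteq> verts T2" using chain_sub by auto
  have CV: "?C \<subseteq> verts T" using C1V C2V vT by blast
  have v1C: "v1 \<in> ?C" using chain_v[OF v1] by blast
  have le: "\<forall>x\<in>?C. x \<le> v1"
  proof
    fix x assume "x \<in> ?C"
    thus "x \<le> v1"
    proof
      assume "x \<in> ?C1" thus ?thesis using chain_le[OF it1] by blast
    next
      assume "x \<in> ?C2" hence "x \<le> v2" using chain_le[OF it2] by blast
      thus ?thesis using lt by simp
    qed
  qed
  have rootT: "root T \<in> ?C"
  proof -
    have "root T = min (Min (verts T1)) (Min (verts T2))"
      unfolding root_def vT using it_fin[OF it1] it_fin[OF it2] it_ne[OF it1] it_ne[OF it2]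
      by (simp add: Min_Un)
    hence "root T = root T1 \<or> root T = root T2" unfolding root_def by (simp add: min_def)
    thus ?thesis using chain_root[OF it1 v1] chain_root[OF it2 v2] by (elim disjE) simp_all
  qed
  have cT: "consec ?C \<subseteq> edges T" using eT by blast
  note cc = chainchar[OF itT CV v1C le rootT cT]
  have chT: "chain T v1 = ?C" using cc(1) .
  have D1O: "?D1 \<subseteq> ?O1" and D2O: "?D2 \<subseteq> ?O2" using comp_edges_off by blast+
  have D1E: "(x,y) \<in> ?D1 \<Longrightarrow> x \<in> verts T1 \<and> y \<in> verts T1" for x y
    using D1O off_sub it_edge[OF it1] by blast
  have D2E: "(x,y) \<in> ?D2 \<Longrightarrow> x \<in> verts T2 \<and> y \<in> verts T2" for x y
    using D2O off_sub it_edge[OF it2] by blast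
  have offT: "offchain_edges T v1 = ?D1 \<union> ?D2"
  proof
    show "offchain_edges T v1 \<subseteq> ?D1 \<union> ?D2"
    proof
      fix e assume e: "e \<in> offchain_edges T v1"
      obtain x y where xy: "e = (x,y)" by force
      have "(x,y) \<in> edges T" "y \<notin> ?C" using e xy chT by (auto simp: offchain_edges_def)
      moreover have "(x,y) \<notin> consec ?C" using consec_son calculation(2) by blast
      ultimately show "e \<in> ?D1 \<union> ?D2" using eT xy by blast
    qed
    show "?D1 \<union> ?D2 \<subseteq> offchain_edges T v1"
    proof
      fix e assume e: "e \<in> ?D1 \<union> ?D2"
      obtain x y where xy: "e = (x,y)" by force
      have inE: "(x,y) \<in> edges T" using e xy eT by blast
      have "y \<notin> ?C"
      proof (cases "(x,y) \<in> ?D1")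
        case True
        hence "y \<notin> ?C1" using D1O off_son by blast
        moreover have "y \<notin> ?C2" using D1E[OF True] C2V disj by blast
        ultimately show ?thesis by blast
      next
        case False
        hence D2: "(x,y) \<in> ?D2" using e xy by blast
        hence "y \<notin> ?C2" using D2O off_son by blast
        moreover have "y \<notin> ?C1" using D2E[OF D2] C1V disj by blast
        ultimately show ?thesis by blast
      qed
      thus "e \<in> offchain_edges T v1" using inE xy chT by (simp add: offchain_edges_def)
    qed
  qed
  have comp1: "decomp_comp T v1 a = decomp_comp T1 v1 a" if a: "a \<in> ?C1" for a
  proof (rule reach)
    show "edges (decomp_comp T1 v1 a) \<subseteq> offchain_edges T v1" using offT a by blast
    fix x y assume x: "(a,x) \<in> ?O1\<^sup>*" and xy: "(x,y) \<in> offchain_edges T v1"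
    have xV: "x \<in> verts T1" using W_sub[OF it1 _ x] a C1V by blast
    have "(x,y) \<notin> ?D2" using D2E[of x y] xV disj by blast
    hence "(x,y) \<in> ?D1" using xy offT by blast
    thus "(x,y) \<in> ?O1" using D1O by blast
  qed
  have comp2: "decomp_comp T v1 a = decomp_comp T2 v2 a" if a: "a \<in> ?C2" for a
  proof (rule reach)
    show "edges (decomp_comp T2 v2 a) \<subseteq> offchain_edges T v1" using offT a by blast
    fix x y assume x: "(a,x) \<in> ?O2\<^sup>*" and xy: "(x,y) \<in> offchain_edges T v1"
    have xV: "x \<in> verts T2" using W_sub[OF it2 _ x] a C2V by blast
    have "(x,y) \<notin> ?D1" using D1E[of x y] xV disj by blast
    hence "(x,y) \<in> ?D2" using xy offT by blast
    thus "(x,y) \<in> ?O2" using D2O by blast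
  qed
  show ?thesis using chT comp1 comp2 by blast
qed



lemma blk_ex: assumes "union_of_blocks P V" "x \<in> V" shows "\<exists>B\<in>P. x \<in> B \<and> B \<subseteq> V"
proof -
  obtain Q where Q: "Q \<subseteq> P" "V = \<Union>Q" using assms(1) unfolding union_of_blocks_def by blast
  then obtain B where "B \<in> Q" "x \<in> B" using assms(2) by blast
  thus ?thesis using Q by blast
qed

lemma blk_uniq: assumes "std_partition r P" "B \<in> P" "B' \<in> P" "x \<in> B" "x \<in> B'" shows "B = B'"
proof (rule ccontr)
  assume "B \<noteq> B'"
  moreover have "disjoint P" using assms(1) partition_onD2 unfolding std_partition_def by blast
  ultimately have "B \<inter> B' = {}" using disjointD assms(2,3) by blast
  thus False using assms(4,5) by blast
qed

lemma blk_side: assumes "std_partition r P" "union_of_blocks P V1" "B \<in> P" "y \<in> B"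
  shows "B \<subseteq> V1 \<longleftrightarrow> y \<in> V1"
proof
  assume "y \<in> V1"
  then obtain B' where "B' \<in> P" "y \<in> B'" "B' \<subseteq> V1" using blk_ex[OF assms(2)] by blast
  thus "B \<subseteq> V1" using blk_uniq[OF assms(1) assms(3) _ assms(4)] by blast
qed (use assms(4) in blast)

lemma blk_fin: assumes "std_partition r P" "B \<in> P" shows "finite B \<and> B \<noteq> {}"
proof -
  have p: "partition_on {1..r} P" using assms(1) unfolding std_partition_def by blast
  have "B \<subseteq> {1..r}" using partition_onD1[OF p] assms(2) by blast
  hence "finite B" using finite_subset by blast
  moreover have "B \<noteq> {}" using partition_onD3[OF p] assms(2) by blast
  ultimately show ?thesis by blast
qed

lemma union_diff: assumes "std_partition r P" "union_of_blocks P V" "union_of_blocks P V1"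
  shows "union_of_blocks P (V - V1)"
proof -
  obtain Q where Q: "Q \<subseteq> P" "V = \<Union>Q" using assms(2) unfolding union_of_blocks_def by blast
  let ?Q = "{B\<in>Q. \<not> B \<subseteq> V1}"
  have "V - V1 = \<Union>?Q"
  proof
    show "V - V1 \<subseteq> \<Union>?Q"
    proof
      fix x assume x: "x \<in> V - V1"
      then obtain B where B: "B \<in> Q" "x \<in> B" using Q by blast
      hence "\<not> B \<subseteq> V1" using x by blast
      thus "x \<in> \<Union>?Q" using B by blast
    qed
    show "\<Union>?Q \<subseteq> V - V1"
    proof
      fix x assume "x \<in> \<Union>?Q"
      then obtain B where B: "B \<in> Q" "x \<in> B" "\<not> B \<subseteq> V1" by blast
      have "x \<notin> V1" using blk_side[OF assms(1,3), of B x] B Q(1) by blast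
      thus "x \<in> V - V1" using B Q by blast
    qed
  qed
  moreover have "?Q \<subseteq> P" using Q(1) by blast
  ultimately have "?Q \<subseteq> P \<and> V - V1 = \<Union>?Q" by simp
  thus ?thesis unfolding union_of_blocks_def by (rule exI)
qed

lemma dg:
  assumes sp: "std_partition r P" and pT: "pi_inc_tree P T" and v: "v \<in> verts T"
    and U: "union_of_blocks P V1" and V1T: "V1 \<subseteq> verts T"
  shows "SC T v V1 \<longleftrightarrow> (\<exists>\<C>\<subseteq>dep_components P T v. V1 = \<Union>(\<Union>\<C>))"
proof -
  have it: "inc_tree T" using pT unfolding pi_inc_tree_def by blast
  have UT: "union_of_blocks P (verts T)" using pT unfolding pi_inc_tree_def by blast
  let ?E = "dep_edges P T v"
  let ?S = "?E \<union> ?E\<inverse>"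
  let ?N = "dep_nodes P T"
  let ?comp = "\<lambda>B. {B' \<in> ?N. (B, B') \<in> ?S\<^sup>*}"
  have compsD: "dep_components P T v = ?comp ` ?N" unfolding dep_components_def by simp
  have Nin: "B \<in> ?N \<longleftrightarrow> B \<in> P \<and> B \<subseteq> verts T" for B unfolding dep_nodes_def by simp
  have Eunf: "(B, B') \<in> ?E \<longleftrightarrow> B \<in> ?N \<and> B' \<in> ?N \<and> Max B \<notin> chain T v \<and>
        (\<exists>a\<in>chain T v. Max B \<in> verts (decomp_comp T v a) \<and> Max B \<noteq> a \<and> a \<in> B')" for B B'
    unfolding dep_edges_def by simp
  show ?thesis
  proof
    assume sc: "SC T v V1"
    have E1: "B \<subseteq> V1 \<longleftrightarrow> B' \<subseteq> V1" if e: "(B,B') \<in> ?E" for B B'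
    proof -
      obtain a where a: "a \<in> chain T v" "Max B \<in> verts (decomp_comp T v a)" "a \<in> B'"
        and BN: "B \<in> ?N" and BN': "B' \<in> ?N" using e Eunf by blast
      have BP: "B \<in> P" "B' \<in> P" using BN BN' Nin by blast+
      have "Max B \<in> B" using blk_fin[OF sp BP(1)] Max_in by blast
      hence "B \<subseteq> V1 \<longleftrightarrow> Max B \<in> V1" using blk_side[OF sp U BP(1)] by blast
      also have "\<dots> \<longleftrightarrow> a \<in> V1" using sc a unfolding SC_def by blast
      also have "\<dots> \<longleftrightarrow> B' \<subseteq> V1" using blk_side[OF sp U BP(2) a(3)] by blast
      finally show ?thesis .
    qed
    have E2: "B \<subseteq> V1 \<longleftrightarrow> B' \<subseteq> V1" if "(B,B') \<in> ?S\<^sup>*" for B B'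
      using that
    proof (induction rule: rtrancl_induct)
      case (step y z)
      hence "(y,z) \<in> ?E \<or> (z,y) \<in> ?E" by blast
      hence "y \<subseteq> V1 \<longleftrightarrow> z \<subseteq> V1" using E1 by blast
      thus ?case using step.IH by blast
    qed simp
    let ?CC = "{K \<in> dep_components P T v. \<forall>B\<in>K. B \<subseteq> V1}"
    have "V1 = \<Union>(\<Union>?CC)"
    proof
      show "\<Union>(\<Union>?CC) \<subseteq> V1" by blast
      show "V1 \<subseteq> \<Union>(\<Union>?CC)"
      proof
        fix x assume x: "x \<in> V1"
        then obtain B where B: "B \<in> P" "x \<in> B" "B \<subseteq> V1" using blk_ex[OF U] by blast
        have BN: "B \<in> ?N" using B V1T Nin by blast
        have K0: "?comp B \<in> dep_components P T v" using compsD BN by blast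
        have "B \<in> ?comp B" using BN by simp
        moreover have "\<forall>B'\<in>?comp B. B' \<subseteq> V1" using E2 B(3) by blast
        ultimately have c: "?comp B \<in> ?CC" "B \<in> ?comp B" using K0 by blast+
        show "x \<in> \<Union>(\<Union>?CC)" by (rule UnionI[OF UnionI[OF c(1) c(2)] B(2)])
      qed
    qed
    moreover have "?CC \<subseteq> dep_components P T v" by (rule subsetI) simp
    ultimately have "?CC \<subseteq> dep_components P T v \<and> V1 = \<Union>(\<Union>?CC)" by simp
    thus "\<exists>\<C>\<subseteq>dep_components P T v. V1 = \<Union>(\<Union>\<C>)" by (rule exI)
  next
    assume "\<exists>\<C>\<subseteq>dep_components P T v. V1 = \<Union>(\<Union>\<C>)"
    then obtain CC where CC: "CC \<subseteq> dep_components P T v" "V1 = \<Union>(\<Union>CC)" by blast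
    have KC: "\<exists>B0\<in>?N. K = ?comp B0" if "K \<in> CC" for K using that CC(1) compsD by blast
    have M: "y \<in> V1 \<longleftrightarrow> B \<in> \<Union>CC" if BN: "B \<in> ?N" and y: "y \<in> B" for B y
    proof
      assume "y \<in> V1"
      then obtain K B' where K: "K \<in> CC" "B' \<in> K" "y \<in> B'" using CC(2) by blast
      obtain B0 where "K = ?comp B0" using KC[OF K(1)] by blast
      hence "B' \<in> ?N" using K(2) by blast
      hence "B' = B" using blk_uniq[OF sp _ _ K(3) y] BN Nin by blast
      thus "B \<in> \<Union>CC" using K by blast
    next
      assume "B \<in> \<Union>CC" thus "y \<in> V1" using CC(2) y by blast
    qed
    have N: "B \<in> \<Union>CC \<longleftrightarrow> B' \<in> \<Union>CC" if e: "(B,B') \<in> ?E" for B B'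
    proof
      assume "B \<in> \<Union>CC"
      then obtain K where K: "K \<in> CC" "B \<in> K" by blast
      obtain B0 where B0: "K = ?comp B0" using KC[OF K(1)] by blast
      have "(B0,B) \<in> ?S\<^sup>*" using K(2) B0 by blast
      moreover have "(B,B') \<in> ?S" using e by blast
      ultimately have "(B0,B') \<in> ?S\<^sup>*" by (rule rtrancl_into_rtrancl)
      moreover have "B' \<in> ?N" using e Eunf by blast
      ultimately have "B' \<in> K" using B0 by blast
      thus "B' \<in> \<Union>CC" using K by blast
    next
      assume "B' \<in> \<Union>CC"
      then obtain K where K: "K \<in> CC" "B' \<in> K" by blast
      obtain B0 where B0: "K = ?comp B0" using KC[OF K(1)] by blast
      have "(B0,B') \<in> ?S\<^sup>*" using K(2) B0 by blast
      moreover have "(B',B) \<in> ?S" using e by blast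
      ultimately have "(B0,B) \<in> ?S\<^sup>*" by (rule rtrancl_into_rtrancl)
      moreover have "B \<in> ?N" using e Eunf by blast
      ultimately have "B \<in> K" using B0 by blast
      thus "B \<in> \<Union>CC" using K by blast
    qed
    show "SC T v V1" unfolding SC_def
    proof (intro ballI)
      fix a x assume a: "a \<in> chain T v" and x: "x \<in> verts (decomp_comp T v a)"
      have ax: "(a,x) \<in> (offchain_edges T v)\<^sup>*" using x by (simp add: comp_verts)
      show "x \<in> V1 \<longleftrightarrow> a \<in> V1"
      proof (cases "x = a")
        case False
        have xc: "x \<notin> chain T v" using off_reach_ne[OF ax False] .
        have aV: "a \<in> verts T" using a chain_sub by blast
        have xV: "x \<in> verts T" using W_sub[OF it aV ax] .
        obtain B where B: "B \<in> P" "x \<in> B" "B \<subseteq> verts T" using blk_ex[OF UT xV] by blast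
        obtain Ba where Ba: "Ba \<in> P" "a \<in> Ba" "Ba \<subseteq> verts T" using blk_ex[OF UT aV] by blast
        have BN: "B \<in> ?N" and BaN: "Ba \<in> ?N" using B Ba Nin by blast+
        have fB: "finite B" using blk_fin[OF sp B(1)] by blast
        have mB: "Max B \<in> B" using blk_fin[OF sp B(1)] Max_in by blast
        have xm: "(x, Max B) \<in> (edges T)\<^sup>*"
        proof (cases "x = Max B")
          case False
          have "x \<le> Max B" using Max_ge[OF fB B(2)] .
          hence "x < Max B" using False by simp
          hence "ancestor T x (Max B)" using pT B mB unfolding pi_inc_tree_def by blast
          thus ?thesis unfolding ancestor_def by (rule trancl_into_rtrancl)
        qed simp
        note dm = desc_off[OF it xc xm]
        have am: "(a, Max B) \<in> (offchain_edges T v)\<^sup>*" using ax dm by (meson rtrancl_trans)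
        have "Max B \<noteq> a" using dm a by blast
        hence "(B, Ba) \<in> ?E" using Eunf BN BaN dm a am Ba(2) by (simp add: comp_verts) blast
        hence "B \<in> \<Union>CC \<longleftrightarrow> Ba \<in> \<Union>CC" using N by blast
        thus ?thesis using M[OF BN B(2)] M[OF BaN Ba(2)] by blast
      qed simp
    qed
  qed
qed



definition Sol :: "nat set set \<Rightarrow> tree \<Rightarrow> nat set \<Rightarrow> nat \<Rightarrow> tree \<Rightarrow> tree \<Rightarrow> nat \<Rightarrow> bool" where
  "Sol P T V1 v1 T1 T2 v2 \<longleftrightarrow> pi_inc_tree P T1 \<and> pi_inc_tree P T2 \<and>
             verts T1 = V1 \<and> verts T2 = verts T - V1 \<and> v2 \<in> verts T2 \<and> v2 < v1 \<and>
             T = spl T1 v1 T2 v2"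

lemma sol_facts:
  assumes pT: "pi_inc_tree P T" and v1: "v1 \<in> V1" and S: "Sol P T V1 v1 T1 T2 v2"
  shows "SC T v1 V1 \<and> T1 = restrT T v1 (chain T v1 \<inter> V1) \<and> T2 = restrT T v1 (chain T v1 - V1)
     \<and> v2 = Max (chain T v1 - V1)"
proof -
  have it: "inc_tree T" using pT unfolding pi_inc_tree_def by blast
  have it1: "inc_tree T1" and it2: "inc_tree T2" using S unfolding Sol_def pi_inc_tree_def by blast+
  have vT1: "verts T1 = V1" and vT2: "verts T2 = verts T - V1" and v2: "v2 \<in> verts T2"
    and lt: "v2 < v1" and Teq: "T = spl T1 v1 T2 v2" using S unfolding Sol_def by blast+
  have disj: "verts T1 \<inter> verts T2 = {}" using vT1 vT2 by blast
  have v1': "v1 \<in> verts T1" using v1 vT1 by simp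
  note ss = spl_struct[OF it it1 it2 disj v1' v2 lt Teq]
  let ?C1 = "chain T1 v1" and ?C2 = "chain T2 v2"
  have chT: "chain T v1 = ?C1 \<union> ?C2" using ss by blast
  have cmp1: "decomp_comp T v1 a = decomp_comp T1 v1 a" if "a \<in> ?C1" for a using ss that by blast
  have cmp2: "decomp_comp T v1 a = decomp_comp T2 v2 a" if "a \<in> ?C2" for a using ss that by blast
  have C1V: "?C1 \<subseteq> V1" using chain_sub vT1 by blast
  have C2V: "?C2 \<subseteq> verts T - V1" using chain_sub vT2 by blast
  have K1: "chain T v1 \<inter> V1 = ?C1" using chT C1V C2V by blast
  have K2: "chain T v1 - V1 = ?C2" using chT C1V C2V by blast
  have sc: "SC T v1 V1" unfolding SC_def
  proof (intro ballI)
    fix a x assume a: "a \<in> chain T v1" and x: "x \<in> verts (decomp_comp T v1 a)"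
    show "x \<in> V1 \<longleftrightarrow> a \<in> V1"
    proof (cases "a \<in> ?C1")
      case True
      hence "(a,x) \<in> (offchain_edges T1 v1)\<^sup>*" using x cmp1 by (simp add: comp_verts)
      hence "x \<in> verts T1" using W_sub[OF it1] True chain_sub by blast
      thus ?thesis using True C1V vT1 by blast
    next
      case False
      hence aC2: "a \<in> ?C2" using a chT by blast
      hence "(a,x) \<in> (offchain_edges T2 v2)\<^sup>*" using x cmp2 by (simp add: comp_verts)
      hence "x \<in> verts T2" using W_sub[OF it2] aC2 chain_sub by blast
      thus ?thesis using aC2 C2V vT2 by blast
    qed
  qed
  have R1: "restrT T v1 ?C1 = T1"
  proof -
    have "T1 = (verts T1, edges T1)" by (rule tree_eq)
    also have "\<dots> = (\<Union>a\<in>?C1. verts (decomp_comp T1 v1 a), consec ?C1 \<union> (\<Union>a\<in>?C1. edges (decomp_comp T1 v1 a)))"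
      using verts_decomp[OF it1 v1'] edges_decomp[OF it1 v1'] by simp
    also have "\<dots> = restrT T v1 ?C1" unfolding restrT_def using cmp1 by simp
    finally show ?thesis by simp
  qed
  have R2: "restrT T v1 ?C2 = T2"
  proof -
    have "T2 = (verts T2, edges T2)" by (rule tree_eq)
    also have "\<dots> = (\<Union>a\<in>?C2. verts (decomp_comp T2 v2 a), consec ?C2 \<union> (\<Union>a\<in>?C2. edges (decomp_comp T2 v2 a)))"
      using verts_decomp[OF it2 v2] edges_decomp[OF it2 v2] by simp
    also have "\<dots> = restrT T v1 ?C2" unfolding restrT_def using cmp2 by simp
    finally show ?thesis by simp
  qed
  have fC2: "finite ?C2" using chain_sub it_fin[OF it2] finite_subset by blast
  have "Max ?C2 = v2" using fC2 chain_le[OF it2] chain_v[OF v2] by (intro Max_eqI) auto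
  thus ?thesis using sc R1 R2 K1 K2 by simp
qed

lemma exist:
  assumes sp: "std_partition r P" and pT: "pi_inc_tree P T" and V1T: "V1 \<subset> verts T"
    and U: "union_of_blocks P V1" and v1: "v1 \<in> V1" and sc: "SC T v1 V1"
  shows "Sol P T V1 v1 (restrT T v1 (chain T v1 \<inter> V1)) (restrT T v1 (chain T v1 - V1)) (Max (chain T v1 - V1))"
proof -
  have it: "inc_tree T" using pT unfolding pi_inc_tree_def by blast
  have UT: "union_of_blocks P (verts T)" using pT unfolding pi_inc_tree_def by blast
  have V1s: "V1 \<subseteq> verts T" using V1T by (rule psubset_imp_subset)
  have v1T: "v1 \<in> verts T" using v1 V1s by blast
  let ?C = "chain T v1"
  let ?K1 = "?C \<inter> V1" and ?K2 = "?C - V1"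
  let ?Y1 = "restrT T v1 ?K1" and ?Y2 = "restrT T v1 ?K2" and ?w = "Max ?K2"
  have scD: "x \<in> V1 \<longleftrightarrow> a \<in> V1" if aC: "a \<in> ?C" and ax: "(a,x) \<in> (offchain_edges T v1)\<^sup>*" for a x
  proof -
    have xW: "x \<in> verts (decomp_comp T v1 a)" using ax by (simp add: comp_verts)
    have "\<forall>a\<in>?C. \<forall>x\<in>verts (decomp_comp T v1 a). (x \<in> V1 \<longleftrightarrow> a \<in> V1)" using sc unfolding SC_def .
    thus ?thesis using aC xW by blast
  qed
  have v1C: "v1 \<in> ?C" using chain_v[OF v1T] .
  have K1ne: "?K1 \<noteq> {}" using v1C v1 by blast
  obtain x0 where x0: "x0 \<in> verts T" "x0 \<notin> V1" using psubset_imp_ex_mem[OF V1T] by blast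
  obtain a0 where a0: "a0 \<in> ?C" "(a0,x0) \<in> (offchain_edges T v1)\<^sup>*" using anchor_ex[OF it v1T x0(1)] by blast
  have "a0 \<notin> V1" using scD[OF a0] x0 by blast
  hence K2ne: "?K2 \<noteq> {}" using a0 by blast
  have r1: "inc_tree ?Y1 \<and> chain ?Y1 (Max ?K1) = ?K1 \<and> (\<forall>a\<in>?K1. decomp_comp ?Y1 (Max ?K1) a = decomp_comp T v1 a)
     \<and> (\<forall>i\<in>verts ?Y1. \<forall>j\<in>verts ?Y1. ancestor T i j \<longrightarrow> ancestor ?Y1 i j)"
    by (rule restr[OF it v1T _ K1ne]) (auto simp: restrT_def)
  have r2: "inc_tree ?Y2 \<and> chain ?Y2 (Max ?K2) = ?K2 \<and> (\<forall>a\<in>?K2. decomp_comp ?Y2 (Max ?K2) a = decomp_comp T v1 a)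
     \<and> (\<forall>i\<in>verts ?Y2. \<forall>j\<in>verts ?Y2. ancestor T i j \<longrightarrow> ancestor ?Y2 i j)"
    by (rule restr[OF it v1T _ K2ne]) (auto simp: restrT_def)
  have fC: "finite ?C" using chain_sub it_fin[OF it] finite_subset by blast
  have mK1: "Max ?K1 = v1" using fC chain_le[OF it] v1C v1 by (intro Max_eqI) auto
  have vY1: "verts ?Y1 = V1"
  proof
    show "verts ?Y1 \<subseteq> V1"
    proof
      fix x assume "x \<in> verts ?Y1"
      then obtain a where a: "a \<in> ?K1" "(a,x) \<in> (offchain_edges T v1)\<^sup>*" by (auto simp: restrT_def comp_verts)
      thus "x \<in> V1" using scD[of a x] by blast
    qed
    show "V1 \<subseteq> verts ?Y1"
    proof
      fix x assume x: "x \<in> V1"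
      hence "x \<in> verts T" using V1s by blast
      then obtain a where a: "a \<in> ?C" "(a,x) \<in> (offchain_edges T v1)\<^sup>*" using anchor_ex[OF it v1T] by blast
      hence "a \<in> ?K1" using scD[OF a] x by blast
      thus "x \<in> verts ?Y1" using a by (auto simp: restrT_def comp_verts)
    qed
  qed
  have vY2: "verts ?Y2 = verts T - V1"
  proof
    show "verts ?Y2 \<subseteq> verts T - V1"
    proof
      fix x assume "x \<in> verts ?Y2"
      then obtain a where a: "a \<in> ?K2" "(a,x) \<in> (offchain_edges T v1)\<^sup>*" by (auto simp: restrT_def comp_verts)
      have "x \<notin> V1" using scD[of a x] a by blast
      moreover have "x \<in> verts T" using W_sub[OF it _ a(2)] a(1) chain_sub by blast
      ultimately show "x \<in> verts T - V1" by blast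
    qed
    show "verts T - V1 \<subseteq> verts ?Y2"
    proof
      fix x assume x: "x \<in> verts T - V1"
      then obtain a where a: "a \<in> ?C" "(a,x) \<in> (offchain_edges T v1)\<^sup>*" using anchor_ex[OF it v1T] by blast
      hence "a \<in> ?K2" using scD[OF a] x by blast
      thus "x \<in> verts ?Y2" using a by (auto simp: restrT_def comp_verts)
    qed
  qed
  have pY1: "pi_inc_tree P ?Y1" unfolding pi_inc_tree_def
  proof (intro conjI ballI impI)
    show "inc_tree ?Y1" using r1 by blast
    show "union_of_blocks P (verts ?Y1)" using vY1 U by simp
    fix B i j assume B: "B \<in> P" "B \<subseteq> verts ?Y1" and ij: "i \<in> B" "j \<in> B" "i < j"
    have "B \<subseteq> verts T" using B vY1 V1s by blast
    hence "ancestor T i j" using pT B ij unfolding pi_inc_tree_def by blast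
    thus "ancestor ?Y1 i j" using r1 B ij by blast
  qed
  have pY2: "pi_inc_tree P ?Y2" unfolding pi_inc_tree_def
  proof (intro conjI ballI impI)
    show "inc_tree ?Y2" using r2 by blast
    show "union_of_blocks P (verts ?Y2)" using vY2 union_diff[OF sp UT U] by simp
    fix B i j assume B: "B \<in> P" "B \<subseteq> verts ?Y2" and ij: "i \<in> B" "j \<in> B" "i < j"
    have "B \<subseteq> verts T" using B vY2 by blast
    hence "ancestor T i j" using pT B ij unfolding pi_inc_tree_def by blast
    thus "ancestor ?Y2 i j" using r2 B ij by blast
  qed
  have fK2: "finite ?K2" using fC by simp
  have wK2: "?w \<in> ?K2" using Max_in[OF fK2 K2ne] .
  have wY2: "?w \<in> verts ?Y2" using wK2 chain_sub vY2 by blast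
  have "?w \<le> v1" using wK2 chain_le[OF it] by blast
  moreover have "?w \<noteq> v1"
  proof
    assume "?w = v1"
    hence "v1 \<in> ?K2" using wK2 by simp
    thus False using v1 by simp
  qed
  ultimately have wlt: "?w < v1" by simp
  have ch1: "chain ?Y1 v1 = ?K1" using r1 mK1 by simp
  have ch2: "chain ?Y2 ?w = ?K2" using r2 by simp
  have dc1: "decomp_comp ?Y1 v1 a = decomp_comp T v1 a" if "a \<in> ?K1" for a using r1 mK1 that by simp
  have dc2: "decomp_comp ?Y2 ?w a = decomp_comp T v1 a" if "a \<in> ?K2" for a using r2 that by simp
  have KU: "?K1 \<union> ?K2 = ?C" by blast
  have "spl ?Y1 v1 ?Y2 ?w = (verts (spl ?Y1 v1 ?Y2 ?w), edges (spl ?Y1 v1 ?Y2 ?w))" by (rule tree_eq)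
  also have "verts (spl ?Y1 v1 ?Y2 ?w) = verts T" using spl_verts vY1 vY2 V1s by auto
  also have "edges (spl ?Y1 v1 ?Y2 ?w) = consec ?C \<union> (\<Union>a\<in>?K1. edges (decomp_comp T v1 a))
       \<union> (\<Union>a\<in>?K2. edges (decomp_comp T v1 a))"
    unfolding spl_edges ch1 ch2 KU using dc1 dc2 by simp
  also have "\<dots> = consec ?C \<union> (\<Union>a\<in>?C. edges (decomp_comp T v1 a))" by blast
  also have "\<dots> = edges T" using edges_decomp[OF it v1T] by simp
  finally have "spl ?Y1 v1 ?Y2 ?w = T" using tree_eq[of T] by simp
  thus ?thesis unfolding Sol_def using pY1 pY2 vY1 vY2 wY2 wlt by simp
qed

theorem lemma3p9:
  fixes r :: nat and P :: "nat set set" and T :: tree and V1 :: "nat set" and v1 :: nat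
  assumes "std_partition r P"
    and "pi_inc_tree P T"
    and "V1 \<subset> verts T" and "V1 \<noteq> {}" and "union_of_blocks P V1"
    and "v1 \<in> V1"
  shows "((\<exists>T1 T2 v2. pi_inc_tree P T1 \<and> pi_inc_tree P T2 \<and>
             verts T1 = V1 \<and> verts T2 = verts T - V1 \<and> v2 \<in> verts T2 \<and> v2 < v1 \<and>
             T = spl T1 v1 T2 v2)
          \<longleftrightarrow> (\<exists>\<C>\<subseteq>dep_components P T v1. V1 = \<Union>(\<Union>\<C>)))
       \<and> ((\<exists>\<C>\<subseteq>dep_components P T v1. V1 = \<Union>(\<Union>\<C>)) \<longrightarrow>
          (\<exists>!(T1, T2, v2). pi_inc_tree P T1 \<and> pi_inc_tree P T2 \<and>
             verts T1 = V1 \<and> verts T2 = verts T - V1 \<and> v2 \<in> verts T2 \<and> v2 < v1 \<and>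
             T = spl T1 v1 T2 v2))"
  unfolding Sol_def[symmetric]
proof -
  have V1T: "V1 \<subseteq> verts T" using assms(3) by (rule psubset_imp_subset)
  have v1T: "v1 \<in> verts T" using assms(6) V1T by blast
  have dgq: "SC T v1 V1 \<longleftrightarrow> (\<exists>\<C>\<subseteq>dep_components P T v1. V1 = \<Union>(\<Union>\<C>))"
    using dg[OF assms(1,2) v1T assms(5) V1T] .
  let ?Y1 = "restrT T v1 (chain T v1 \<inter> V1)" and ?Y2 = "restrT T v1 (chain T v1 - V1)"
    and ?w = "Max (chain T v1 - V1)"
  have ex: "SC T v1 V1 \<Longrightarrow> Sol P T V1 v1 ?Y1 ?Y2 ?w" using exist[OF assms(1,2,3,5,6)] .
  have sf: "Sol P T V1 v1 T1 T2 v2 \<Longrightarrow> SC T v1 V1 \<and> T1 = ?Y1 \<and> T2 = ?Y2 \<and> v2 = ?w" for T1 T2 v2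
    using sol_facts[OF assms(2,6)] by blast
  have c1: "(\<exists>T1 T2 v2. Sol P T V1 v1 T1 T2 v2) \<longleftrightarrow> SC T v1 V1"
  proof
    assume "\<exists>T1 T2 v2. Sol P T V1 v1 T1 T2 v2"
    then obtain T1 T2 v2 where "Sol P T V1 v1 T1 T2 v2" by blast
    thus "SC T v1 V1" using sf by blast
  next
    assume "SC T v1 V1" thus "\<exists>T1 T2 v2. Sol P T V1 v1 T1 T2 v2" using ex by blast
  qed
  have c2: "\<exists>!(T1, T2, v2). Sol P T V1 v1 T1 T2 v2" if "SC T v1 V1"
  proof (rule ex1I[of _ "(?Y1, ?Y2, ?w)"])
    show "case (?Y1, ?Y2, ?w) of (T1, T2, v2) \<Rightarrow> Sol P T V1 v1 T1 T2 v2" using ex[OF that] by simp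
  next
    fix x assume x: "case x of (T1, T2, v2) \<Rightarrow> Sol P T V1 v1 T1 T2 v2"
    obtain T1 T2 v2 where xe: "x = (T1, T2, v2)" by (cases x) blast
    have "Sol P T V1 v1 T1 T2 v2" using x xe by simp
    thus "x = (?Y1, ?Y2, ?w)" using sf xe by simp
  qed
  show "((\<exists>T1 T2 v2. Sol P T V1 v1 T1 T2 v2) \<longleftrightarrow> (\<exists>\<C>\<subseteq>dep_components P T v1. V1 = \<Union>(\<Union>\<C>)))
       \<and> ((\<exists>\<C>\<subseteq>dep_components P T v1. V1 = \<Union>(\<Union>\<C>)) \<longrightarrow> (\<exists>!(T1, T2, v2). Sol P T V1 v1 T1 T2 v2))"
  proof (rule conjI)
    show "(\<exists>T1 T2 v2. Sol P T V1 v1 T1 T2 v2) \<longleftrightarrow> (\<exists>\<C>\<subseteq>dep_components P T v1. V1 = \<Union>(\<Union>\<C>))"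
      using c1 dgq by (rule trans)
    show "(\<exists>\<C>\<subseteq>dep_components P T v1. V1 = \<Union>(\<Union>\<C>)) \<longrightarrow> (\<exists>!(T1, T2, v2). Sol P T V1 v1 T1 T2 v2)"
    proof
      assume "\<exists>\<C>\<subseteq>dep_components P T v1. V1 = \<Union>(\<Union>\<C>)"
      hence "SC T v1 V1" using dgq by (rule iffD2[rotated])
      thus "\<exists>!(T1, T2, v2). Sol P T V1 v1 T1 T2 v2" by (rule c2)
    qed
  qed
qed

end
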